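(* Let $m\ge0$, let $f:\mathbb{R}^n\to\mathbb{R}$ be $m$-weakly convex, $x_k\in\mathbb{R}^n$, $\rho>0$, $\beta\in(0,1)$. Let $\tilde f_j:\mathbb{R}^n\to\mathbb{R}$ be convex with $\tilde f_j(x)\le f(x)+\frac m2\|x-x_k\|^2$ for all $x$; set $z_{j+1}=\arg\min_x\{\tilde f_j(x)+\frac\rho2\|x-x_k\|^2\}$, $\eta_j=\min_x\{\tilde f_j(x)+\frac\rho2\|x-x_k\|^2\}$, $s_{j+1}=\rho(x_k-z_{j+1})$. Let $g_{j+1}\in\mathbb{R}^n$ satisfy $g_{j+1}-m(z_{j+1}-x_k)\in\partial f(z_{j+1})$, and let $\tilde f_{j+1}:\mathbb{R}^n\to\mathbb{R}$ be convex with, for all $x\in\mathbb{R}^n$: (i) $\tilde f_{j+1}(x)\le f(x)+\frac m2\|x-x_k\|^2$; (ii) $\tilde f_{j+1}(x)\ge\tilde f_j(z_{j+1})+\langle s_{j+1},x-z_{j+1}\rangle$; (iii) $\tilde f_{j+1}(x)\ge f(z_{j+1})+\frac m2\|z_{j+1}-x_k\|^2+\langle g_{j+1},x-z_{j+1}\rangle$. Let $\eta_{j+1}=\min_x\{\tilde f_{j+1}(x)+\frac\rho2\|x-x_k\|^2\}$ and $\tilde\epsilon_{j+1}=f(z_{j+1})+\frac m2\|z_{j+1}-x_k\|^2-\tilde f_j(z_{j+1})$. Then $$\eta_{j+1}\ge\eta_j+\frac12\min\Big\{\tilde\epsilon_{j+1},\ \frac{\rho\,\tilde\epsilon_{j+1}^2}{\|g_{j+1}-s_{j+1}\|^2}\Big\}$$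 (with the second term read as $+\infty$ if $g_{j+1}=s_{j+1}$). If moreover $f(x_k)-\big(f(z_{j+1})+\frac m2\|z_{j+1}-x_k\|^2\big)<\beta\big(f(x_k)-\tilde f_j(z_{j+1})\big)$, then, with $\tilde\Delta_j:=f(x_k)-\eta_j$, $$\eta_{j+1}\ge\eta_j+\frac12\min\Big\{(1-\beta)\tilde\Delta_j,\ \frac{(1-\beta)^2\rho\,\tilde\Delta_j^2}{\|g_{j+1}-s_{j+1}\|^2}\Big\}.$$
   Context: A function $f$ is $m$-weakly convex ($m\ge 0$) if $x\mapsto f(x)+\frac{m}{2}\|x\|^2$ is convex. For such $f$, the (Fréchet) subdifferential is $\partial f(x)=\{v\in\mathbb{R}^n: f(y)\ge f(x)+\langle v,y-x\rangle-\frac{m}{2}\|y-x\|^2\ \forall y\}$. *)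

theory Defs
  imports "HOL-Analysis.Analysis"
begin

definition weakly_convex :: "real \<Rightarrow> ('a::euclidean_space \<Rightarrow> real) \<Rightarrow> bool" where
  "weakly_convex m f \<longleftrightarrow> convex_on UNIV (\<lambda>x. f x + m / 2 * norm x ^ 2)"

definition wc_subdiff :: "real \<Rightarrow> ('a::euclidean_space \<Rightarrow> real) \<Rightarrow> 'a \<Rightarrow> 'a set" where
  "wc_subdiff m f x = {v. \<forall>y. f y \<ge> f x + inner v (y - x) - m / 2 * norm (y - x) ^ 2}"

end

theory Submission
  imports Defs
begin

lemma key_quad:
  fixes w d :: "'a::real_inner"
  assumes "\<rho> > 0"
  shows "\<rho> / 2 * norm w ^ 2 + l * inner d w \<ge> - (l^2 * norm d ^ 2 / (2 * \<rho>))"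
proof -
  have "0 \<le> norm (\<rho> *\<^sub>R w + l *\<^sub>R d) ^ 2" by simp
  also have "\<dots> = \<rho>^2 * norm w ^ 2 + 2 * \<rho> * l * inner d w + l^2 * norm d ^ 2"
    unfolding power2_norm_eq_inner
    by (simp add: inner_add_left inner_add_right inner_commute algebra_simps power2_eq_square)
  finally have "0 \<le> \<rho>^2 * norm w ^ 2 + 2 * \<rho> * l * inner d w + l^2 * norm d ^ 2" .
  hence "0 \<le> (\<rho>^2 * norm w ^ 2 + 2 * \<rho> * l * inner d w + l^2 * norm d ^ 2) / (2*\<rho>)"
    using assms by simp
  also have "\<dots> = \<rho> / 2 * norm w ^ 2 + l * inner d w + l^2 * norm d ^ 2 / (2 * \<rho>)"
    using assms by (simp add: field_simps power2_eq_square)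
  finally show ?thesis by simp
qed

theorem mainTheorem7:
  fixes f ft0 ft1 :: "'a::euclidean_space \<Rightarrow> real"
    and m \<rho> \<beta> :: real and xk z g :: 'a
  assumes m: "m \<ge> 0"
    and wc: "weakly_convex m f"
    and rho: "\<rho> > 0"
    and beta: "0 < \<beta>" "\<beta> < 1"
    and ft0_cvx: "convex_on UNIV ft0"
    and ft0_le: "\<forall>x. ft0 x \<le> f x + m / 2 * norm (x - xk) ^ 2"
    and z_min: "\<forall>x. ft0 z + \<rho> / 2 * norm (z - xk) ^ 2 \<le> ft0 x + \<rho> / 2 * norm (x - xk) ^ 2"
    and g: "g - m *\<^sub>R (z - xk) \<in> wc_subdiff m f z"
    and ft1_cvx: "convex_on UNIV ft1"
    and ft1_i: "\<forall>x. ft1 x \<le> f x + m / 2 * norm (x - xk) ^ 2"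
    and ft1_ii: "\<forall>x. ft1 x \<ge> ft0 z + inner (\<rho> *\<^sub>R (xk - z)) (x - z)"
    and ft1_iii: "\<forall>x. ft1 x \<ge> f z + m / 2 * norm (z - xk) ^ 2 + inner g (x - z)"
  defines "s \<equiv> \<rho> *\<^sub>R (xk - z)"
    and "\<eta>0 \<equiv> (INF x. ft0 x + \<rho> / 2 * norm (x - xk) ^ 2)"
    and "\<eta>1 \<equiv> (INF x. ft1 x + \<rho> / 2 * norm (x - xk) ^ 2)"
    and "\<epsilon> \<equiv> f z + m / 2 * norm (z - xk) ^ 2 - ft0 z"
  shows "\<eta>1 \<ge> \<eta>0 + 1 / 2 * (if g = s then \<epsilon>
                 else min \<epsilon> (\<rho> * \<epsilon> ^ 2 / norm (g - s) ^ 2))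
       \<and> (f xk - (f z + m / 2 * norm (z - xk) ^ 2) < \<beta> * (f xk - ft0 z) \<longrightarrow>
          \<eta>1 \<ge> \<eta>0 + 1 / 2 * (if g = s then (1 - \<beta>) * (f xk - \<eta>0)
                 else min ((1 - \<beta>) * (f xk - \<eta>0)) ((1 - \<beta>) ^ 2 * \<rho> * (f xk - \<eta>0) ^ 2 / norm (g - s) ^ 2)))"
proof -
  define d where "d = g - s"
  have eta0: "\<eta>0 = ft0 z + \<rho> / 2 * norm (z - xk) ^ 2"
    unfolding \<eta>0_def
  proof (rule antisym)
    show "(INF x. ft0 x + \<rho> / 2 * norm (x - xk) ^ 2) \<le> ft0 z + \<rho> / 2 * norm (z - xk) ^ 2"
      by (rule cINF_lower) (rule bdd_belowI2, rule z_min[rule_format], simp)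
    show "ft0 z + \<rho> / 2 * norm (z - xk) ^ 2 \<le> (INF x. ft0 x + \<rho> / 2 * norm (x - xk) ^ 2)"
      by (rule cINF_greatest) (simp, rule z_min[rule_format])
  qed
  have eps0: "\<epsilon> \<ge> 0" using ft0_le[rule_format, of z] unfolding \<epsilon>_def by simp
  have gen: "\<eta>1 \<ge> \<eta>0 + l * \<epsilon> - l^2 * norm d ^ 2 / (2 * \<rho>)" if l: "0 \<le> l" "l \<le> 1" for l
    unfolding \<eta>1_def
  proof (rule cINF_greatest)
    fix x
    define w where "w = x - z"
    have a: "ft1 x \<ge> ft0 z + inner s w" using ft1_ii[rule_format, of x] unfolding s_def w_def by simp
    have b: "ft1 x \<ge> ft0 z + \<epsilon> + inner g w" using ft1_iii[rule_format, of x] unfolding \<epsilon>_def w_def by simp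
    have c: "ft1 x \<ge> ft0 z + l * \<epsilon> + inner s w + l * inner d w"
    proof -
      have "(1 - l) * ft1 x \<ge> (1 - l) * (ft0 z + inner s w)" using a l by (intro mult_left_mono) auto
      moreover have "l * ft1 x \<ge> l * (ft0 z + \<epsilon> + inner g w)" using b l by (intro mult_left_mono) auto
      ultimately show ?thesis unfolding d_def by (simp add: inner_diff_left algebra_simps)
    qed
    have nx: "norm (x - xk) ^ 2 = norm w ^ 2 + 2 * inner w (z - xk) + norm (z - xk) ^ 2"
    proof -
      have "x - xk = w + (z - xk)" unfolding w_def by simp
      thus ?thesis by (simp add: power2_norm_eq_inner inner_add inner_commute algebra_simps)
    qed
    have sw: "inner s w = - \<rho> * inner w (z - xk)"
      unfolding s_def by (simp add: inner_commute inner_diff_left inner_diff_right algebra_simps)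
    have q: "\<rho> / 2 * norm w ^ 2 + l * inner d w \<ge> - (l^2 * norm d ^ 2 / (2 * \<rho>))"
      by (rule key_quad[OF rho])
    have "ft1 x + \<rho> / 2 * norm (x - xk) ^ 2 \<ge> \<eta>0 + l * \<epsilon> + (\<rho> / 2 * norm w ^ 2 + l * inner d w)"
      using c unfolding eta0 nx sw by (simp add: algebra_simps)
    with q show "\<eta>0 + l * \<epsilon> - l\<^sup>2 * (norm d)\<^sup>2 / (2 * \<rho>) \<le> ft1 x + \<rho> / 2 * (norm (x - xk))\<^sup>2"
      by linarith
  qed simp
  have part: "\<eta>1 \<ge> \<eta>0 + 1 / 2 * (if g = s then e else min e (\<rho> * e ^ 2 / norm (g - s) ^ 2))"
    if e: "0 \<le> e" "e \<le> \<epsilon>" for e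
  proof (cases "g = s")
    case True
    hence "d = 0" unfolding d_def by simp
    with gen[of 1] e eps0 True show ?thesis by simp
  next
    case False
    hence dpos: "norm d ^ 2 > 0" unfolding d_def by simp
    show ?thesis
    proof (cases "\<rho> * e / norm d ^ 2 \<le> 1")
      case True
      define l where "l = \<rho> * e / norm d ^ 2"
      have l0: "0 \<le> l" unfolding l_def using e rho dpos by simp
      have "\<eta>1 \<ge> \<eta>0 + l * \<epsilon> - l^2 * norm d ^ 2 / (2 * \<rho>)" using gen[OF l0] True unfolding l_def[symmetric] by simp
      moreover have "l * \<epsilon> \<ge> l * e" using l0 e by (simp add: mult_left_mono)
      moreover have "l * e - l^2 * norm d ^ 2 / (2 * \<rho>) = \<rho> * e ^ 2 / norm d ^ 2 / 2"
        unfolding l_def using rho dpos by (simp add: field_simps power2_eq_square)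
      moreover have "min e (\<rho> * e ^ 2 / norm (g - s) ^ 2) \<le> \<rho> * e ^ 2 / norm d ^ 2"
        unfolding d_def by simp
      ultimately show ?thesis using False by simp
    next
      case F2: False
      hence "norm d ^ 2 < \<rho> * e" using dpos by (simp add: field_simps)
      hence "norm d ^ 2 / (2 * \<rho>) \<le> e / 2" using rho by (simp add: field_simps)
      moreover have "min e (\<rho> * e ^ 2 / norm (g - s) ^ 2) \<le> e" by simp
      moreover have "\<eta>1 \<ge> \<eta>0 + \<epsilon> - norm d ^ 2 / (2 * \<rho>)" using gen[of 1] by simp
      ultimately show ?thesis using e False by (simp only: if_False)
    qed
  qed
  have fx: "f xk - \<eta>0 \<ge> 0"
  proof -
    have "\<eta>0 \<le> ft0 xk" using z_min[rule_format, of xk] unfolding eta0 by simp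
    thus ?thesis using ft0_le[rule_format, of xk] by simp
  qed
  show ?thesis
  proof
    show "\<eta>1 \<ge> \<eta>0 + 1 / 2 * (if g = s then \<epsilon> else min \<epsilon> (\<rho> * \<epsilon> ^ 2 / norm (g - s) ^ 2))"
      using part[of \<epsilon>] eps0 by simp
  next
    show "f xk - (f z + m / 2 * norm (z - xk) ^ 2) < \<beta> * (f xk - ft0 z) \<longrightarrow>
          \<eta>1 \<ge> \<eta>0 + 1 / 2 * (if g = s then (1 - \<beta>) * (f xk - \<eta>0)
                 else min ((1 - \<beta>) * (f xk - \<eta>0)) ((1 - \<beta>) ^ 2 * \<rho> * (f xk - \<eta>0) ^ 2 / norm (g - s) ^ 2))"
    proof
      assume h: "f xk - (f z + m / 2 * norm (z - xk) ^ 2) < \<beta> * (f xk - ft0 z)"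
      define e where "e = (1 - \<beta>) * (f xk - \<eta>0)"
      have e0: "0 \<le> e" unfolding e_def using fx beta by simp
      have "f xk - \<eta>0 \<le> f xk - ft0 z" unfolding eta0 using rho by simp
      hence "e \<le> (1 - \<beta>) * (f xk - ft0 z)" unfolding e_def using beta by (simp add: mult_left_mono)
      also have "\<dots> \<le> \<epsilon>" using h unfolding \<epsilon>_def by (simp add: algebra_simps)
      finally have eeps: "e \<le> \<epsilon>" .
      have sq: "(1 - \<beta>) ^ 2 * \<rho> * (f xk - \<eta>0) ^ 2 = \<rho> * e ^ 2"
        unfolding e_def by (simp add: power_mult_distrib)
      from part[OF e0 eeps] show "\<eta>1 \<ge> \<eta>0 + 1 / 2 * (if g = s then (1 - \<beta>) * (f xk - \<eta>0)
                 else min ((1 - \<beta>) * (f xk - \<eta>0)) ((1 - \<beta>) ^ 2 * \<rho> * (f xk - \<eta>0) ^ 2 / norm (g - s) ^ 2))"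
        unfolding sq unfolding e_def .
    qed
  qed
qed

end
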